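(* Consider the sequentially observed MDP described in the context, and let $V^*_{t+1}\in\mathbb{R}^n$ be defined by the recursion in the context. Fix an epoch $t\in\{1,\dots,N-1\}$ and a state $i$. Let $H_i\in\mathbb{R}^{n\times m}$ have entries $H_i(j,k)=\big(r_t(i,a_k)+V^*_{t+1}(j)\big)G_i(j,k)$, and let $X_i^*\in\mathbb{R}^{n\times m}$ be an optimal solution of the linear program $$\max_{X_i\in\mathbb{R}^{n\times m}}\ \sum_{k=1}^m\sum_{j=1}^nH_i(j,k)X_i(j,k)$$ subject to, for $j=1,\dots,n$ and $k=1,\dots,m-1$, $0\le X_i(j,k)\le 1-\sum_{l=1}^{k-1}\sum_{s=1}^nG_i(s,l)X_i(s,l)$, and, for $j=1,\dots,n$, $X_i(j,m)=1-\sum_{l=1}^{m-1}\sum_{s=1}^nG_i(s,l)X_i(s,l)$. Let $z(1)=1$ and $z(k)=1-\sum_{l=1}^{k-1}\sum_{s=1}^nG_i(s,l)X_i^*(s,l)$ for $k=2,\dots,m$. Then $$V^*_t(i)=\mathrm{Tr}(H_i^TX_i^* ),$$ and the matrix $P^*_i(t)$ with entries $P^*_i(j,k,t)=X_i^*(j,k)/z(k)$ if $z(k)>0$ and $P^*_i(j,k,t)=1$ otherwise ($j=1,\dots,n$, $k=1,\dots,m$) attains the maximum defining $V^*_t(i)$, i.e. is an optimal decision at state $i$ and epoch $t$.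
   Context: States $S=\{1,\dots,n\}$; at every state the actions are $a_1,\dots,a_m$ (in this fixed order); decision epochs $t=1,\dots,N-1$, $N\ge 2$. For each epoch $t$, state $i$, action index $k$, $G_i(j,k)=G_i(j,k,t)\ge 0$ with $\sum_jG_i(j,k)=1$ is the probability that action $a_k$ in state $i$ leads to state $j$. Rewards $r_t(i,a_k)\in\mathbb{R}$ for $t\le N-1$ and terminal rewards $r_N(i)$, with vector $\mathbf{r}_N$. Model: at each epoch, in state $i$, for phases $k=1,\dots,m-1$ the agent observes the realized transition of action $a_k$ and accepts it (taking $a_k$) or rejects it; if $a_1,\dots,a_{m-1}$ are all rejected, $a_m$ is taken. Decision variables at epoch $t$: matrices $P_i(t)\in[0,1]^{n\times m}$ with entries $P_i(j,k)=P_i(j,k,t)$ (probability of accepting an observed transition to $j$ in state $i$, phase $k$), with $P_i(j,m)=1$ for all $j$; $\mathcal{C}$ is the set of all such matrices. Define $q_i(a_k)=\sum_jG_i(j,k)P_i(j,k)$; $p_i(a_k)=\big(\prod_{l=1}^{k-1}(1-q_i(a_l))\big)q_i(a_k)$ (empty product $=1$); $r_t(i)=\sum_{k=1}^mp_i(a_k)r_t(i,a_k)$; $M_t(j,i)=\sum_{k=1}^m\big(\prod_{l=1}^{k-1}(1-q_i(a_l))\big)G_i(j,k)P_i(j,k)$. The optimal values are defined recursively by $V^*_N(i)=r_N(i)$ and, for $t=N-1,\dots,1$, $V^*_t(i)=\max_{P_i(t)\in\mathcal{C}}\big\{r_t(i)+\sum_{j=1}^nM_t(j,i)V^*_{t+1}(j)\big\}$.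 *)

theory Defs
  imports Complex_Main
begin

text \<open>States are 1..n, action indices 1..m, epochs 1..N-1.
  G t i j k = G_i(j,k,t): probability that action a_k in state i at epoch t leads to j.
  r t i k = r_t(i,a_k); rN i = r_N(i).
  A decision matrix for a fixed state/epoch is a function P :: nat => nat => real,
  P j k = P_i(j,k); only entries with j in 1..n, k in 1..m are relevant.
  Below, Gi stands for the function (j k. G_i(j,k,t)) at fixed t, i, and
  ri for (k. r_t(i,a_k)).\<close>

definition qv :: "nat \<Rightarrow> (nat \<Rightarrow> nat \<Rightarrow> real) \<Rightarrow> (nat \<Rightarrow> nat \<Rightarrow> real) \<Rightarrow> nat \<Rightarrow> real" where
  "qv n Gi P k = (\<Sum>j=1..n. Gi j k * P j k)"

definition surv :: "nat \<Rightarrow> (nat \<Rightarrow> nat \<Rightarrow> real) \<Rightarrow> (nat \<Rightarrow> nat \<Rightarrow> real) \<Rightarrow> nat \<Rightarrow> real" where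
  "surv n Gi P k = (\<Prod>l\<in>{1..<k}. 1 - qv n Gi P l)"

definition pact :: "nat \<Rightarrow> (nat \<Rightarrow> nat \<Rightarrow> real) \<Rightarrow> (nat \<Rightarrow> nat \<Rightarrow> real) \<Rightarrow> nat \<Rightarrow> real" where
  "pact n Gi P k = surv n Gi P k * qv n Gi P k"

definition rew :: "nat \<Rightarrow> nat \<Rightarrow> (nat \<Rightarrow> nat \<Rightarrow> real) \<Rightarrow> (nat \<Rightarrow> real) \<Rightarrow> (nat \<Rightarrow> nat \<Rightarrow> real) \<Rightarrow> real" where
  "rew n m Gi ri P = (\<Sum>k=1..m. pact n Gi P k * ri k)"

definition Mt :: "nat \<Rightarrow> nat \<Rightarrow> (nat \<Rightarrow> nat \<Rightarrow> real) \<Rightarrow> (nat \<Rightarrow> nat \<Rightarrow> real) \<Rightarrow> nat \<Rightarrow> real" where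
  "Mt n m Gi P j = (\<Sum>k=1..m. surv n Gi P k * Gi j k * P j k)"

definition adm :: "nat \<Rightarrow> nat \<Rightarrow> (nat \<Rightarrow> nat \<Rightarrow> real) \<Rightarrow> bool" where
  "adm n m P \<longleftrightarrow> (\<forall>j\<in>{1..n}. \<forall>k\<in>{1..m}. 0 \<le> P j k \<and> P j k \<le> 1) \<and> (\<forall>j\<in>{1..n}. P j m = 1)"

definition objv :: "nat \<Rightarrow> nat \<Rightarrow> (nat \<Rightarrow> nat \<Rightarrow> real) \<Rightarrow> (nat \<Rightarrow> real) \<Rightarrow> (nat \<Rightarrow> real) \<Rightarrow> (nat \<Rightarrow> nat \<Rightarrow> real) \<Rightarrow> real" where
  "objv n m Gi ri V P = rew n m Gi ri P + (\<Sum>j=1..n. Mt n m Gi P j * V j)"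

text \<open>Backward recursion: Vback ... k = V^*_{N-k}. The maximum over C is written as a supremum
  (the maximum is attained, so both coincide).\<close>
primrec Vback :: "nat \<Rightarrow> nat \<Rightarrow> nat \<Rightarrow> (nat \<Rightarrow> nat \<Rightarrow> nat \<Rightarrow> nat \<Rightarrow> real) \<Rightarrow> (nat \<Rightarrow> nat \<Rightarrow> nat \<Rightarrow> real)
    \<Rightarrow> (nat \<Rightarrow> real) \<Rightarrow> nat \<Rightarrow> nat \<Rightarrow> real" where
  "Vback n m N G r rN 0 = rN"
| "Vback n m N G r rN (Suc k) = (\<lambda>i. SUP P\<in>{P. adm n m P}.
      objv n m (G (N - Suc k) i) (r (N - Suc k) i) (Vback n m N G r rN k) P)"

definition Vstar :: "nat \<Rightarrow> nat \<Rightarrow> nat \<Rightarrow> (nat \<Rightarrow> nat \<Rightarrow> nat \<Rightarrow> nat \<Rightarrow> real) \<Rightarrow> (nat \<Rightarrow> nat \<Rightarrow> nat \<Rightarrow> real)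
    \<Rightarrow> (nat \<Rightarrow> real) \<Rightarrow> nat \<Rightarrow> nat \<Rightarrow> real" where
  "Vstar n m N G r rN t = Vback n m N G r rN (N - t)"

definition lp_used :: "nat \<Rightarrow> (nat \<Rightarrow> nat \<Rightarrow> real) \<Rightarrow> (nat \<Rightarrow> nat \<Rightarrow> real) \<Rightarrow> nat \<Rightarrow> real" where
  "lp_used n Gi X k = (\<Sum>l\<in>{1..<k}. \<Sum>s=1..n. Gi s l * X s l)"

definition lp_feasible :: "nat \<Rightarrow> nat \<Rightarrow> (nat \<Rightarrow> nat \<Rightarrow> real) \<Rightarrow> (nat \<Rightarrow> nat \<Rightarrow> real) \<Rightarrow> bool" where
  "lp_feasible n m Gi X \<longleftrightarrow>
     (\<forall>j\<in>{1..n}. \<forall>k\<in>{1..m-1}. 0 \<le> X j k \<and> X j k \<le> 1 - lp_used n Gi X k) \<and>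
     (\<forall>j\<in>{1..n}. X j m = 1 - lp_used n Gi X m)"

definition lp_obj :: "nat \<Rightarrow> nat \<Rightarrow> (nat \<Rightarrow> nat \<Rightarrow> real) \<Rightarrow> (nat \<Rightarrow> nat \<Rightarrow> real) \<Rightarrow> real" where
  "lp_obj n m H X = (\<Sum>k=1..m. \<Sum>j=1..n. H j k * X j k)"

definition lp_optimal :: "nat \<Rightarrow> nat \<Rightarrow> (nat \<Rightarrow> nat \<Rightarrow> real) \<Rightarrow> (nat \<Rightarrow> nat \<Rightarrow> real) \<Rightarrow> (nat \<Rightarrow> nat \<Rightarrow> real) \<Rightarrow> bool" where
  "lp_optimal n m Gi H X \<longleftrightarrow> lp_feasible n m Gi X \<and>
     (\<forall>Y. lp_feasible n m Gi Y \<longrightarrow> lp_obj n m H Y \<le> lp_obj n m H X)"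

definition zc :: "nat \<Rightarrow> (nat \<Rightarrow> nat \<Rightarrow> real) \<Rightarrow> (nat \<Rightarrow> nat \<Rightarrow> real) \<Rightarrow> nat \<Rightarrow> real" where
  "zc n Gi X k = (if k = 1 then 1 else 1 - lp_used n Gi X k)"

definition Pstar :: "nat \<Rightarrow> (nat \<Rightarrow> nat \<Rightarrow> real) \<Rightarrow> (nat \<Rightarrow> nat \<Rightarrow> real) \<Rightarrow> nat \<Rightarrow> nat \<Rightarrow> real" where
  "Pstar n Gi X j k = (if zc n Gi X k > 0 then X j k / zc n Gi X k else 1)"

end

theory Submission
  imports Defs
begin

lemma surv_Suc: "k \<ge> 1 \<Longrightarrow> surv n Gi P (Suc k) = surv n Gi P k * (1 - qv n Gi P k)"
proof -
  assume "k \<ge> 1"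
  then have "{1..<Suc k} = insert k {1..<k}" by auto
  then show ?thesis unfolding surv_def by (simp add: mult.commute)
qed

lemma used_Suc: "k \<ge> 1 \<Longrightarrow> lp_used n Gi X (Suc k) = lp_used n Gi X k + (\<Sum>s=1..n. Gi s k * X s k)"
proof -
  assume "k \<ge> 1"
  then have "{1..<Suc k} = insert k {1..<k}" by auto
  then show ?thesis unfolding lp_used_def by simp
qed

lemma surv_1: "surv n Gi P 1 = 1" by (simp add: surv_def)
lemma used_1: "lp_used n Gi X 1 = 0" by (simp add: lp_used_def)

lemma zc_eq: "zc n Gi X k = 1 - lp_used n Gi X k"
  by (simp add: zc_def lp_used_def)

lemma used_surv:
  "k \<ge> 1 \<Longrightarrow> lp_used n Gi (\<lambda>j k. surv n Gi P k * P j k) k = 1 - surv n Gi P k"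
proof (induction k rule: nat_induct_at_least)
  case base then show ?case by (simp add: surv_def lp_used_def)
next
  case (Suc k)
  have "lp_used n Gi (\<lambda>j k. surv n Gi P k * P j k) (Suc k)
      = 1 - surv n Gi P k + (\<Sum>s=1..n. Gi s k * (surv n Gi P k * P s k))"
    using Suc by (simp add: used_Suc)
  also have "(\<Sum>s=1..n. Gi s k * (surv n Gi P k * P s k)) = surv n Gi P k * qv n Gi P k"
    unfolding qv_def sum_distrib_left by (rule sum.cong) auto
  finally show ?case using Suc by (simp add: surv_Suc algebra_simps)
qed

lemma objv_eq:
  "objv n m Gi ri V P = lp_obj n m (\<lambda>j k. (ri k + V j) * Gi j k) (\<lambda>j k. surv n Gi P k * P j k)"
proof -
  have "objv n m Gi ri V P = (\<Sum>k=1..m. \<Sum>j=1..n. surv n Gi P k * Gi j k * P j k * ri k)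
        + (\<Sum>j=1..n. \<Sum>k=1..m. surv n Gi P k * Gi j k * P j k * V j)"
    unfolding objv_def rew_def Mt_def pact_def qv_def
    by (simp add: sum_distrib_left sum_distrib_right mult.assoc)
  also have "(\<Sum>j=1..n. \<Sum>k=1..m. surv n Gi P k * Gi j k * P j k * V j)
      = (\<Sum>k=1..m. \<Sum>j=1..n. surv n Gi P k * Gi j k * P j k * V j)"
    by (rule sum.swap)
  also have "(\<Sum>k=1..m. \<Sum>j=1..n. surv n Gi P k * Gi j k * P j k * ri k) + \<dots>
      = lp_obj n m (\<lambda>j k. (ri k + V j) * Gi j k) (\<lambda>j k. surv n Gi P k * P j k)"
    unfolding lp_obj_def sum.distrib[symmetric]
    by (rule sum.cong, simp, rule sum.cong, simp, simp add: algebra_simps)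
  finally show ?thesis .
qed

lemma qv_le1:
  assumes Gn: "\<And>j k. j \<in> {1..n} \<Longrightarrow> k \<in> {1..m} \<Longrightarrow> 0 \<le> Gi j k"
    and Gs: "\<And>k. k \<in> {1..m} \<Longrightarrow> (\<Sum>j=1..n. Gi j k) = 1"
    and P: "adm n m P" and k: "k \<in> {1..m}"
  shows "qv n Gi P k \<le> 1"
proof -
  have "qv n Gi P k \<le> (\<Sum>j=1..n. Gi j k)" unfolding qv_def
  proof (rule sum_mono)
    fix j assume "j \<in> {1..n}"
    with Gn k P show "Gi j k * P j k \<le> Gi j k"
      unfolding adm_def by (simp add: mult_left_le)
  qed
  then show ?thesis using Gs k by simp
qed

lemma surv_nonneg:
  assumes Gn: "\<And>j k. j \<in> {1..n} \<Longrightarrow> k \<in> {1..m} \<Longrightarrow> 0 \<le> Gi j k"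
    and Gs: "\<And>k. k \<in> {1..m} \<Longrightarrow> (\<Sum>j=1..n. Gi j k) = 1"
    and P: "adm n m P" and k: "k \<le> m"
  shows "0 \<le> surv n Gi P k"
  unfolding surv_def
proof (rule prod_nonneg)
  fix l assume "l \<in> {1..<k}"
  with k have "l \<in> {1..m}" by auto
  from qv_le1[OF Gn Gs P this] show "0 \<le> 1 - qv n Gi P l" by simp
qed

lemma feasible_of_adm:
  assumes Gn: "\<And>j k. j \<in> {1..n} \<Longrightarrow> k \<in> {1..m} \<Longrightarrow> 0 \<le> Gi j k"
    and Gs: "\<And>k. k \<in> {1..m} \<Longrightarrow> (\<Sum>j=1..n. Gi j k) = 1"
    and P: "adm n m P" and m: "m \<ge> 1"
  shows "lp_feasible n m Gi (\<lambda>j k. surv n Gi P k * P j k)"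
  unfolding lp_feasible_def
proof (intro conjI ballI)
  fix j k assume j: "j \<in> {1..n}" and k: "k \<in> {1..m-1}"
  have s: "0 \<le> surv n Gi P k" using surv_nonneg[OF Gn Gs P] k by auto
  have p: "0 \<le> P j k" "P j k \<le> 1" using P j k unfolding adm_def by auto
  have u: "1 - lp_used n Gi (\<lambda>j k. surv n Gi P k * P j k) k = surv n Gi P k"
    using used_surv[of k] k by simp
  show "0 \<le> surv n Gi P k * P j k" using s p by simp
  show "surv n Gi P k * P j k \<le> 1 - lp_used n Gi (\<lambda>j k. surv n Gi P k * P j k) k"
    using s p u by (simp add: mult_left_le)
next
  fix j assume j: "j \<in> {1..n}"
  have "P j m = 1" using P j unfolding adm_def by auto
  then show "surv n Gi P m * P j m = 1 - lp_used n Gi (\<lambda>j k. surv n Gi P k * P j k) m"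
    using used_surv[of m] m by simp
qed

lemma zc_nonneg:
  assumes Gn: "\<And>j k. j \<in> {1..n} \<Longrightarrow> k \<in> {1..m} \<Longrightarrow> 0 \<le> Gi j k"
    and Gs: "\<And>k. k \<in> {1..m} \<Longrightarrow> (\<Sum>j=1..n. Gi j k) = 1"
    and X: "lp_feasible n m Gi X"
  shows "k \<ge> 1 \<Longrightarrow> k \<le> m \<Longrightarrow> 0 \<le> zc n Gi X k"
proof (induction k rule: nat_induct_at_least)
  case base then show ?case by (simp add: zc_def)
next
  case (Suc k)
  have "(\<Sum>s=1..n. Gi s k * X s k) \<le> (\<Sum>s=1..n. Gi s k * zc n Gi X k)"
  proof (rule sum_mono)
    fix s assume s: "s \<in> {1..n}"
    have "X s k \<le> zc n Gi X k" using X s Suc unfolding lp_feasible_def zc_eq by auto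
    moreover have "0 \<le> Gi s k" using Gn s Suc by auto
    ultimately show "Gi s k * X s k \<le> Gi s k * zc n Gi X k" by (simp add: mult_left_mono)
  qed
  also have "\<dots> = zc n Gi X k" using Gs[of k] Suc by (simp add: sum_distrib_right[symmetric])
  finally show ?case using Suc by (simp add: zc_eq used_Suc)
qed

lemma surv_Pstar:
  assumes Gn: "\<And>j k. j \<in> {1..n} \<Longrightarrow> k \<in> {1..m} \<Longrightarrow> 0 \<le> Gi j k"
    and Gs: "\<And>k. k \<in> {1..m} \<Longrightarrow> (\<Sum>j=1..n. Gi j k) = 1"
    and X: "lp_feasible n m Gi X"
  shows "k \<ge> 1 \<Longrightarrow> k \<le> m \<Longrightarrow> surv n Gi (Pstar n Gi X) k = zc n Gi X k"
proof (induction k rule: nat_induct_at_least)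
  case base then show ?case by (simp add: zc_def surv_def)
next
  case (Suc k)
  have z0: "0 \<le> zc n Gi X k" using zc_nonneg[OF Gn Gs X, of k] Suc by simp
  have ih: "surv n Gi (Pstar n Gi X) k = zc n Gi X k" using Suc by simp
  have zs: "zc n Gi X (Suc k) = zc n Gi X k - (\<Sum>s=1..n. Gi s k * X s k)"
    using Suc by (simp add: zc_eq used_Suc)
  show ?case
  proof (cases "zc n Gi X k > 0")
    case True
    have "qv n Gi (Pstar n Gi X) k = (\<Sum>s=1..n. Gi s k * X s k) / zc n Gi X k"
      unfolding qv_def Pstar_def using True by (simp add: sum_divide_distrib)
    then show ?thesis using True Suc ih zs by (simp add: surv_Suc field_simps)
  next
    case False
    then have z: "zc n Gi X k = 0" using z0 by simp
    have "\<And>s. s \<in> {1..n} \<Longrightarrow> X s k = 0"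
    proof -
      fix s assume s: "s \<in> {1..n}"
      have "0 \<le> X s k \<and> X s k \<le> zc n Gi X k" using X s Suc unfolding lp_feasible_def zc_eq by auto
      then show "X s k = 0" using z by simp
    qed
    then have "(\<Sum>s=1..n. Gi s k * X s k) = 0" by simp
    then show ?thesis using z zs ih Suc by (simp add: surv_Suc)
  qed
qed

lemma Xm_eq:
  assumes X: "lp_feasible n m Gi X" and j: "j \<in> {1..n}"
  shows "X j m = zc n Gi X m"
  using X j unfolding lp_feasible_def zc_eq by auto

lemma Y_Pstar:
  assumes Gn: "\<And>j k. j \<in> {1..n} \<Longrightarrow> k \<in> {1..m} \<Longrightarrow> 0 \<le> Gi j k"
    and Gs: "\<And>k. k \<in> {1..m} \<Longrightarrow> (\<Sum>j=1..n. Gi j k) = 1"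
    and X: "lp_feasible n m Gi X" and j: "j \<in> {1..n}" and k: "k \<in> {1..m}"
  shows "surv n Gi (Pstar n Gi X) k * Pstar n Gi X j k = X j k"
proof -
  have s: "surv n Gi (Pstar n Gi X) k = zc n Gi X k" using surv_Pstar[OF Gn Gs X] k by auto
  have z0: "0 \<le> zc n Gi X k" using zc_nonneg[OF Gn Gs X] k by auto
  show ?thesis
  proof (cases "zc n Gi X k > 0")
    case True then show ?thesis using s by (simp add: Pstar_def)
  next
    case False
    then have z: "zc n Gi X k = 0" using z0 by simp
    have "X j k = 0"
    proof (cases "k = m")
      case True then show ?thesis using Xm_eq[OF X j] z by simp
    next
      case False
      then have "0 \<le> X j k \<and> X j k \<le> zc n Gi X k" using X j k unfolding lp_feasible_def zc_eq by auto
      then show ?thesis using z by simp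
    qed
    then show ?thesis using s z by (simp add: Pstar_def)
  qed
qed

lemma adm_Pstar:
  assumes Gn: "\<And>j k. j \<in> {1..n} \<Longrightarrow> k \<in> {1..m} \<Longrightarrow> 0 \<le> Gi j k"
    and Gs: "\<And>k. k \<in> {1..m} \<Longrightarrow> (\<Sum>j=1..n. Gi j k) = 1"
    and X: "lp_feasible n m Gi X"
  shows "adm n m (Pstar n Gi X)"
proof -
  have A: "0 \<le> Pstar n Gi X j k \<and> Pstar n Gi X j k \<le> 1" if j: "j \<in> {1..n}" and k: "k \<in> {1..m}" for j k
  proof (cases "zc n Gi X k > 0")
    case False then show ?thesis by (simp add: Pstar_def)
  next
    case True
    have "0 \<le> X j k \<and> X j k \<le> zc n Gi X k"
    proof (cases "k = m")
      case True then show ?thesis using Xm_eq[OF X j] \<open>zc n Gi X k > 0\<close> by simp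
    next
      case False
      then show ?thesis using X j k unfolding lp_feasible_def zc_eq by auto
    qed
    then show ?thesis using True by (simp add: Pstar_def)
  qed
  have B: "Pstar n Gi X j m = 1" if j: "j \<in> {1..n}" for j
    using Xm_eq[OF X j] by (simp add: Pstar_def)
  show ?thesis unfolding adm_def using A B by blast
qed

theorem proposition2:
  fixes n m N t i :: nat
    and G :: "nat \<Rightarrow> nat \<Rightarrow> nat \<Rightarrow> nat \<Rightarrow> real"
    and r :: "nat \<Rightarrow> nat \<Rightarrow> nat \<Rightarrow> real"
    and rN :: "nat \<Rightarrow> real"
    and X :: "nat \<Rightarrow> nat \<Rightarrow> real"
  assumes n: "n \<ge> 1" and m: "m \<ge> 1" and N: "N \<ge> 2"
    and G_nonneg: "\<And>t' i' j k. t' \<in> {1..N-1} \<Longrightarrow> i' \<in> {1..n} \<Longrightarrow> j \<in> {1..n} \<Longrightarrow> k \<in> {1..m}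
                     \<Longrightarrow> 0 \<le> G t' i' j k"
    and G_stoch: "\<And>t' i' k. t' \<in> {1..N-1} \<Longrightarrow> i' \<in> {1..n} \<Longrightarrow> k \<in> {1..m}
                     \<Longrightarrow> (\<Sum>j=1..n. G t' i' j k) = 1"
    and t: "t \<in> {1..N-1}" and i: "i \<in> {1..n}"
    and opt: "lp_optimal n m (G t i)
                (\<lambda>j k. (r t i k + Vstar n m N G r rN (t + 1) j) * G t i j k) X"
  shows "Vstar n m N G r rN t i
           = lp_obj n m (\<lambda>j k. (r t i k + Vstar n m N G r rN (t + 1) j) * G t i j k) X
       \<and> adm n m (Pstar n (G t i) X)
       \<and> objv n m (G t i) (r t i) (Vstar n m N G r rN (t + 1)) (Pstar n (G t i) X)
           = Vstar n m N G r rN t i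
       \<and> (\<forall>P. adm n m P \<longrightarrow>
            objv n m (G t i) (r t i) (Vstar n m N G r rN (t + 1)) P
              \<le> objv n m (G t i) (r t i) (Vstar n m N G r rN (t + 1)) (Pstar n (G t i) X))"
proof -
  define Gi where "Gi = G t i"
  define V where "V = Vstar n m N G r rN (t + 1)"
  define H where "H = (\<lambda>j k. (r t i k + V j) * Gi j k)"
  define f where "f = objv n m Gi (r t i) V"
  have Gn: "\<And>j k. j \<in> {1..n} \<Longrightarrow> k \<in> {1..m} \<Longrightarrow> 0 \<le> Gi j k"
    using G_nonneg t i unfolding Gi_def by blast
  have Gs: "\<And>k. k \<in> {1..m} \<Longrightarrow> (\<Sum>j=1..n. Gi j k) = 1"
    using G_stoch t i unfolding Gi_def by blast
  have X: "lp_feasible n m Gi X" and Xopt: "\<And>Y. lp_feasible n m Gi Y \<Longrightarrow> lp_obj n m H Y \<le> lp_obj n m H X"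
    using opt unfolding lp_optimal_def Gi_def H_def V_def by auto
  have admP: "adm n m (Pstar n Gi X)" by (rule adm_Pstar[OF Gn Gs X])
  have fP: "f (Pstar n Gi X) = lp_obj n m H X"
    unfolding f_def objv_eq H_def[symmetric] lp_obj_def
  proof (rule sum.cong[OF refl], rule sum.cong[OF refl])
    fix k j assume "k \<in> {1..m}" "j \<in> {1..n}"
    then show "H j k * (surv n Gi (Pstar n Gi X) k * Pstar n Gi X j k) = H j k * X j k"
      using Y_Pstar[OF Gn Gs X] by simp
  qed
  have le: "\<And>P. adm n m P \<Longrightarrow> f P \<le> lp_obj n m H X"
  proof -
    fix P assume P: "adm n m P"
    show "f P \<le> lp_obj n m H X"
      unfolding f_def objv_eq H_def[symmetric]
      by (rule Xopt, rule feasible_of_adm[OF Gn Gs P m])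
  qed
  have vt: "Vstar n m N G r rN t i = (SUP P\<in>{P. adm n m P}. f P)"
  proof -
    have e: "N - t = Suc (N - (t+1))" "N - Suc (N - (t+1)) = t" using t by auto
    show ?thesis unfolding Vstar_def e(1) Vback.simps e(2) f_def V_def Gi_def Vstar_def by simp
  qed
  have sup: "(SUP P\<in>{P. adm n m P}. f P) = lp_obj n m H X"
    by (rule cSup_eq_maximum) (use admP fP le in \<open>auto intro!: image_eqI[where x="Pstar n Gi X"]\<close>)
  show ?thesis
    using vt sup fP le admP unfolding f_def H_def V_def Gi_def by simp
qed

end
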